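(* For $n \ge 2$, let $R_n$ denote the outcome of Domineering on the $2 \times n$ rectangle and $T_n$ the outcome on the $2 \times n$ torus. Then: (i) if $R_n = H$ then $T_n = H$; (ii) if $R_n = {\rm 1st}$ and $R_{n-1} \in \{{\rm 1st}, H\}$ then $T_n = H$; (iii) if $R_n = {\rm 1st}$ and $R_{n-1} \in \{{\rm 2nd}, V\}$ then $T_n = {\rm 1st}$; (iv) if $R_n \in \{{\rm 2nd}, V\}$ and $R_{n-1} \in \{{\rm 1st}, H\}$ then $T_n \in \{{\rm 2nd}, H\}$.
   Context: Domineering: Vera places vertical dominoes (covering two vertically adjacent empty cells), Hepzibah places horizontal dominoes (covering two horizontally adjacent empty cells); players alternate, and a player who cannot move on her turn loses. The $2\times n$ rectangle has $2$ rows and $n$ columns. The $2 \times n$ torus is the $2\times n$ array of cells with both pairs of opposite edges identified, so horizontal adjacency wraps around from column $n$ to column $1$ (and a vertical domino occupies both cells of a column). The outcome class is $V$ if Vera wins with optimal play regardless of who moves first, $H$ if Hepzibah wins regardless of who moves first, ${\rm 1st}$ if the first player wins, and ${\rm 2nd}$ if the second player wins. *)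

theory Defs
  imports Main
begin

text \<open>Domineering on 2 x n boards. Cells are pairs (row, column) with row < 2 and
  column < n. A position is given by the set F of still-empty cells.\<close>

type_synonym cell = "nat \<times> nat"

datatype player = Vera | Hepzibah

fun opp :: "player \<Rightarrow> player" where
  "opp Vera = Hepzibah"
| "opp Hepzibah = Vera"

datatype outcome = OV | OH | OFirst | OSecond

definition board :: "nat \<Rightarrow> cell set" where
  "board n = {(r, c). r < 2 \<and> c < n}"

definition vert_moves :: "nat \<Rightarrow> cell set \<Rightarrow> cell set set" where
  "vert_moves n F = {{(0, c), (1, c)} | c. c < n \<and> (0, c) \<in> F \<and> (1, c) \<in> F}"

definition horiz_rect_moves :: "nat \<Rightarrow> cell set \<Rightarrow> cell set set" where
  "horiz_rect_moves n F =
     {{(r, c), (r, c + 1)} | r c. r < 2 \<and> c + 1 < n \<and> (r, c) \<in> F \<and> (r, c + 1) \<in> F}"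

definition horiz_torus_moves :: "nat \<Rightarrow> cell set \<Rightarrow> cell set set" where
  "horiz_torus_moves n F =
     {{(r, c), (r, (c + 1) mod n)} | r c. r < 2 \<and> c < n \<and> (r, c) \<in> F \<and> (r, (c + 1) mod n) \<in> F}"

definition rect_moves :: "nat \<Rightarrow> player \<Rightarrow> cell set \<Rightarrow> cell set set" where
  "rect_moves n p F = (case p of Vera \<Rightarrow> vert_moves n F | Hepzibah \<Rightarrow> horiz_rect_moves n F)"

definition torus_moves :: "nat \<Rightarrow> player \<Rightarrow> cell set \<Rightarrow> cell set set" where
  "torus_moves n p F = (case p of Vera \<Rightarrow> vert_moves n F | Hepzibah \<Rightarrow> horiz_torus_moves n F)"

text \<open>Every move covers two
  empty cells, so with k > card F / 2 the bound is never reached; we use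
  k = Suc (card F), making this the exact notion of a win for the mover.\<close>
fun wins_k :: "nat \<Rightarrow> (player \<Rightarrow> cell set \<Rightarrow> cell set set) \<Rightarrow> player \<Rightarrow> cell set \<Rightarrow> bool" where
  "wins_k 0 mv p F = False"
| "wins_k (Suc k) mv p F = (\<exists>D \<in> mv p F. \<not> wins_k k mv (opp p) (F - D))"

definition wins :: "(player \<Rightarrow> cell set \<Rightarrow> cell set set) \<Rightarrow> player \<Rightarrow> cell set \<Rightarrow> bool" where
  "wins mv p F = wins_k (Suc (card F)) mv p F"

definition outcome_of :: "(player \<Rightarrow> cell set \<Rightarrow> cell set set) \<Rightarrow> cell set \<Rightarrow> outcome" where
  "outcome_of mv F =
    (let v = wins mv Vera F; h = wins mv Hepzibah F in
     if v \<and> h then OFirst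
     else if v \<and> \<not> h then OV
     else if \<not> v \<and> h then OH
     else OSecond)"

definition rect_outcome :: "nat \<Rightarrow> outcome" where
  "rect_outcome n = outcome_of (rect_moves n) (board n)"

definition torus_outcome :: "nat \<Rightarrow> outcome" where
  "torus_outcome n = outcome_of (torus_moves n) (board n)"

end

theory Submission imports Defs begin

lemma wk_stable:
  assumes mv: "\<And>p G D. D \<in> mv p G \<Longrightarrow> D \<subseteq> G \<and> D \<noteq> {}"
  shows "finite F \<Longrightarrow> card F < k \<Longrightarrow> card F < k' \<Longrightarrow> wins_k k mv p F = wins_k k' mv p F"
proof (induction k arbitrary: k' p F)
  case 0 then show ?case by simp
next
  case (Suc k)
  then obtain k'' where k': "k' = Suc k''" by (cases k') auto
  have "\<And>D. D \<in> mv p F \<Longrightarrow> wins_k k mv (opp p) (F - D) = wins_k k'' mv (opp p) (F - D)"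
  proof -
    fix D assume D: "D \<in> mv p F"
    with mv have "D \<subseteq> F" "D \<noteq> {}" by auto
    then have "F - D \<subset> F" by blast
    then have "card (F - D) < card F" using psubset_card_mono[OF Suc.prems(1)] by blast
    then show "wins_k k mv (opp p) (F - D) = wins_k k'' mv (opp p) (F - D)"
      using Suc.IH[of "F - D" k'' "opp p"] Suc.prems k' by simp
  qed
  then show ?case using k' by auto
qed

lemma rect_mv: "D \<in> rect_moves n p G \<Longrightarrow> D \<subseteq> G \<and> D \<noteq> {}"
  by (cases p) (auto simp: rect_moves_def vert_moves_def horiz_rect_moves_def)

lemma torus_mv: "D \<in> torus_moves n p G \<Longrightarrow> D \<subseteq> G \<and> D \<noteq> {}"
  by (cases p) (auto simp: torus_moves_def vert_moves_def horiz_torus_moves_def)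

lemma wk_mono:
  assumes "\<And>G. mv1 Vera G = mv2 Vera G" "\<And>G. mv1 Hepzibah G \<subseteq> mv2 Hepzibah G"
  shows "(wins_k k mv1 Hepzibah F \<longrightarrow> wins_k k mv2 Hepzibah F) \<and> (wins_k k mv2 Vera F \<longrightarrow> wins_k k mv1 Vera F)"
proof (induction k arbitrary: F)
  case 0 then show ?case by simp
next
  case (Suc k)
  have a: "wins_k (Suc k) mv1 Hepzibah F \<longrightarrow> wins_k (Suc k) mv2 Hepzibah F"
    using Suc.IH assms(2) by simp (meson subsetD)
  have b: "wins_k (Suc k) mv2 Vera F \<longrightarrow> wins_k (Suc k) mv1 Vera F"
    using Suc.IH assms(1) by simp metis
  show ?case using a b by blast
qed

lemma wk_agree:
  assumes "\<And>p G. G \<subseteq> F0 \<Longrightarrow> mv1 p G = mv2 p G"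
    and "\<And>p G D. D \<in> mv1 p G \<Longrightarrow> D \<subseteq> G"
  shows "G \<subseteq> F0 \<Longrightarrow> wins_k k mv1 p G = wins_k k mv2 p G"
proof (induction k arbitrary: p G)
  case 0 then show ?case by simp
next
  case (Suc k)
  have "\<And>D. D \<in> mv1 p G \<Longrightarrow> wins_k k mv1 (opp p) (G - D) = wins_k k mv2 (opp p) (G - D)"
  proof -
    fix D assume "D \<in> mv1 p G"
    have "G - D \<subseteq> F0" using Suc.prems by blast
    then show "wins_k k mv1 (opp p) (G - D) = wins_k k mv2 (opp p) (G - D)" using Suc.IH by blast
  qed
  then show ?case using assms(1)[OF Suc.prems] by auto
qed

lemma wk_iso:
  assumes inj: "inj_on f A"
    and comm: "\<And>p G. G \<subseteq> A \<Longrightarrow> mv p (f ` G) = (image f) ` mv p G"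
    and sub: "\<And>p G D. D \<in> mv p G \<Longrightarrow> D \<subseteq> G"
  shows "G \<subseteq> A \<Longrightarrow> wins_k k mv p (f ` G) = wins_k k mv p G"
proof (induction k arbitrary: p G)
  case 0 then show ?case by simp
next
  case (Suc k)
  have "\<And>D. D \<in> mv p G \<Longrightarrow> wins_k k mv (opp p) (f ` G - f ` D) = wins_k k mv (opp p) (G - D)"
  proof -
    fix D assume D: "D \<in> mv p G"
    then have "D \<subseteq> G" using sub by auto
    then have "f ` G - f ` D = f ` (G - D)"
      using inj Suc.prems by (metis Diff_subset inj_on_image_set_diff order_trans)
    then show "wins_k k mv (opp p) (f ` G - f ` D) = wins_k k mv (opp p) (G - D)"
      using Suc.IH[of "G - D" "opp p"] Suc.prems by (metis Diff_subset order_trans)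
  qed
  then show ?case using comm[OF Suc.prems] by auto
qed

definition rot :: "nat \<Rightarrow> cell \<Rightarrow> cell" where
  "rot n x = (fst x, Suc (snd x) mod n)"

lemma suc_mod: "a < n \<Longrightarrow> Suc a mod n = (if Suc a = n then 0 else Suc a)"
  by (cases "Suc a = n") auto

lemma rot_eq: "a < n \<Longrightarrow> b < n \<Longrightarrow> Suc a mod n = Suc b mod n \<Longrightarrow> a = b"
  by (auto simp: suc_mod split: if_splits)

lemma rot_inj: "inj_on (rot n) (board n)"
proof (rule inj_onI)
  fix x y assume "x \<in> board n" "y \<in> board n" "rot n x = rot n y"
  then show "x = y" using rot_eq[of "snd x" n "snd y"]
    by (cases x, cases y) (simp add: board_def rot_def)
qed

lemma rot_pair: "rot n (r, c) = (r, Suc c mod n)"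
  by (simp add: rot_def)

lemma in_rot: "G \<subseteq> board n \<Longrightarrow> (r, c) \<in> rot n ` G \<Longrightarrow> \<exists>a. a < n \<and> (r, a) \<in> G \<and> c = Suc a mod n"
  by (auto simp: rot_def board_def)

lemma vert_comm:
  assumes G: "G \<subseteq> board n"
  shows "vert_moves n (rot n ` G) = (image (rot n)) ` vert_moves n G"
proof
  show "vert_moves n (rot n ` G) \<subseteq> (image (rot n)) ` vert_moves n G"
  proof
    fix D assume "D \<in> vert_moves n (rot n ` G)"
    then obtain c where D: "D = {(0,c),(1,c)}" "c < n" "(0,c) \<in> rot n ` G" "(1,c) \<in> rot n ` G"
      unfolding vert_moves_def by blast
    obtain a where a: "a < n" "(0,a) \<in> G" "c = Suc a mod n" using in_rot[OF G D(3)] by blast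
    obtain b where b: "b < n" "(1,b) \<in> G" "c = Suc b mod n" using in_rot[OF G D(4)] by blast
    have "a = b" using rot_eq a b by metis
    then have "D = rot n ` {(0,a),(1,a)}" using D a by (simp add: rot_pair)
    moreover have "{(0,a),(1,a)} \<in> vert_moves n G" using a b \<open>a = b\<close> unfolding vert_moves_def by blast
    ultimately show "D \<in> (image (rot n)) ` vert_moves n G" by blast
  qed
  show "(image (rot n)) ` vert_moves n G \<subseteq> vert_moves n (rot n ` G)"
  proof
    fix D assume "D \<in> (image (rot n)) ` vert_moves n G"
    then obtain a where a: "D = rot n ` {(0,a),(1,a)}" "a < n" "(0,a) \<in> G" "(1,a) \<in> G"
      unfolding vert_moves_def by blast
    have "D = {(0, Suc a mod n), (1, Suc a mod n)}" using a by (simp add: rot_pair)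
    moreover have "(0, Suc a mod n) \<in> rot n ` G" "(1, Suc a mod n) \<in> rot n ` G"
      using a by (metis image_eqI rot_pair)+
    moreover have "Suc a mod n < n" using a by simp
    ultimately show "D \<in> vert_moves n (rot n ` G)" unfolding vert_moves_def by blast
  qed
qed

lemma horiz_comm:
  assumes G: "G \<subseteq> board n"
  shows "horiz_torus_moves n (rot n ` G) = (image (rot n)) ` horiz_torus_moves n G"
proof
  show "horiz_torus_moves n (rot n ` G) \<subseteq> (image (rot n)) ` horiz_torus_moves n G"
  proof
    fix D assume "D \<in> horiz_torus_moves n (rot n ` G)"
    then obtain r c where D: "D = {(r,c),(r,Suc c mod n)}" "r < 2" "c < n" "(r,c) \<in> rot n ` G" "(r,Suc c mod n) \<in> rot n ` G"
      unfolding horiz_torus_moves_def by auto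
    obtain a where a: "a < n" "(r,a) \<in> G" "c = Suc a mod n" using in_rot[OF G D(4)] by blast
    obtain b where b: "b < n" "(r,b) \<in> G" "Suc c mod n = Suc b mod n" using in_rot[OF G D(5)] by blast
    have "b = Suc a mod n" using rot_eq[of b n "Suc a mod n"] a b by simp
    then have "D = rot n ` {(r,a),(r,Suc a mod n)}" using D a by (simp add: rot_pair)
    moreover have "{(r,a),(r,Suc a mod n)} \<in> horiz_torus_moves n G"
      using a b D(2) \<open>b = Suc a mod n\<close> unfolding horiz_torus_moves_def by auto
    ultimately show "D \<in> (image (rot n)) ` horiz_torus_moves n G" by blast
  qed
  show "(image (rot n)) ` horiz_torus_moves n G \<subseteq> horiz_torus_moves n (rot n ` G)"
  proof
    fix D assume "D \<in> (image (rot n)) ` horiz_torus_moves n G"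
    then obtain r a where a: "D = rot n ` {(r,a),(r,Suc a mod n)}" "r < 2" "a < n" "(r,a) \<in> G" "(r,Suc a mod n) \<in> G"
      unfolding horiz_torus_moves_def by auto
    have "D = {(r, Suc a mod n), (r, Suc (Suc a mod n) mod n)}" using a by (simp add: rot_pair)
    moreover have "(r, Suc a mod n) \<in> rot n ` G" "(r, Suc (Suc a mod n) mod n) \<in> rot n ` G"
      using a by (metis image_eqI rot_pair)+
    moreover have "Suc a mod n < n" using a by simp
    ultimately show "D \<in> horiz_torus_moves n (rot n ` G)" unfolding horiz_torus_moves_def using a(2) by auto
  qed
qed

lemma rot_comm:
  assumes "G \<subseteq> board n"
  shows "torus_moves n p (rot n ` G) = (image (rot n)) ` torus_moves n p G"
  using vert_comm[OF assms] horiz_comm[OF assms] by (cases p) (auto simp: torus_moves_def)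

definition col :: "nat \<Rightarrow> cell set" where "col c = {(0,c),(1,c)}"

lemma board_finite: "finite (board n)"
proof -
  have "board n \<subseteq> {0..<2} \<times> {0..<n}" by (auto simp: board_def)
  then show ?thesis by (rule finite_subset) auto
qed

lemma wins_unfold:
  assumes mvp: "\<And>p G D. D \<in> mv p G \<Longrightarrow> D \<subseteq> G \<and> D \<noteq> {}" and fin: "finite F"
  shows "wins mv p F = (\<exists>D \<in> mv p F. \<not> wins mv (opp p) (F - D))"
proof -
  have "\<And>D. D \<in> mv p F \<Longrightarrow> wins_k (card F) mv (opp p) (F - D) = wins mv (opp p) (F - D)"
  proof -
    fix D assume D: "D \<in> mv p F"
    with mvp have "D \<subseteq> F" "D \<noteq> {}" by auto
    then have "F - D \<subset> F" by blast
    then have "card (F - D) < card F" using psubset_card_mono[OF fin] by blast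
    then show "wins_k (card F) mv (opp p) (F - D) = wins mv (opp p) (F - D)"
      unfolding wins_def using wk_stable[where mv=mv and F="F - D" and k="card F" and k'="Suc (card (F - D))" and p="opp p", OF mvp] fin by simp
  qed
  then show ?thesis unfolding wins_def by simp
qed

lemma vert_board: "vert_moves n (board n) = {col c | c. c < n}"
  by (auto simp: vert_moves_def board_def col_def)

lemma A3: "wins (torus_moves n) Vera (board n) = (\<exists>c<n. \<not> wins (torus_moves n) Hepzibah (board n - col c))"
proof -
  have "wins (torus_moves n) Vera (board n) = (\<exists>D \<in> vert_moves n (board n). \<not> wins (torus_moves n) Hepzibah (board n - D))"
    using wins_unfold[where mv="torus_moves n" and F="board n" and p=Vera, OF torus_mv board_finite]
    by (simp add: torus_moves_def)
  also have "\<dots> = (\<exists>c<n. \<not> wins (torus_moves n) Hepzibah (board n - col c))"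
    unfolding vert_board by blast
  finally show ?thesis .
qed

lemma rot_board: "rot n ` board n = board n"
proof (rule endo_inj_surj[OF board_finite _ rot_inj])
  show "rot n ` board n \<subseteq> board n"
  proof
    fix x assume "x \<in> rot n ` board n"
    then obtain r c where "x = rot n (r, c)" "r < 2" "c < n" unfolding board_def by blast
    then show "x \<in> board n" by (simp add: rot_def board_def)
  qed
qed

lemma rot_col: "rot n ` col c = col (Suc c mod n)"
  by (auto simp: col_def rot_def)

lemma col_sub: "c < n \<Longrightarrow> col c \<subseteq> board n"
  by (auto simp: col_def board_def)

lemma A4step: "c < n \<Longrightarrow> wins (torus_moves n) p (board n - col (Suc c mod n)) = wins (torus_moves n) p (board n - col c)"
proof -
  assume c: "c < n"
  have e: "rot n ` (board n - col c) = board n - col (Suc c mod n)"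
    using inj_on_image_set_diff[OF rot_inj, of "board n" "col c"] col_sub[OF c] rot_board rot_col by simp
  have cd: "card (rot n ` (board n - col c)) = card (board n - col c)"
    by (rule card_image) (meson Diff_subset inj_on_subset rot_inj)
  have "wins (torus_moves n) p (rot n ` (board n - col c)) = wins (torus_moves n) p (board n - col c)"
    unfolding wins_def cd
    by (rule wk_iso[where f="rot n" and A="board n" and mv="torus_moves n", OF rot_inj rot_comm]) (auto dest: torus_mv)
  then show ?thesis using e by simp
qed

lemma A4: "c < n \<Longrightarrow> wins (torus_moves n) p (board n - col c) = wins (torus_moves n) p (board n - col 0)"
proof (induction c)
  case 0 then show ?case by simp
next
  case (Suc c)
  have "Suc c mod n = Suc c" using Suc.prems by simp
  then show ?case using A4step[of c n p] Suc by simp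
qed

lemma board_minus_last: "n \<ge> 1 \<Longrightarrow> board n - col (n - 1) = board (n - 1)"
  by (auto simp: board_def col_def)

lemma agree: "G \<subseteq> board (n - 1) \<Longrightarrow> torus_moves n p G = rect_moves (n - 1) p G"
proof (cases p)
  case Vera
  assume "G \<subseteq> board (n - 1)"
  then show ?thesis using Vera by (auto simp: torus_moves_def rect_moves_def vert_moves_def board_def)
next
  case Hepzibah
  assume G: "G \<subseteq> board (n - 1)"
  have "horiz_torus_moves n G = horiz_rect_moves (n - 1) G"
  proof
    show "horiz_torus_moves n G \<subseteq> horiz_rect_moves (n - 1) G"
    proof
      fix D assume "D \<in> horiz_torus_moves n G"
      then obtain r c where D: "D = {(r,c),(r,(c+1) mod n)}" "r < 2" "c < n" "(r,c) \<in> G" "(r,(c+1) mod n) \<in> G"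
        unfolding horiz_torus_moves_def by blast
      have "c < n - 1" using D(4) G by (auto simp: board_def)
      then have m: "(c+1) mod n = c + 1" by simp
      then have "c + 1 < n - 1" using D(5) G by (auto simp: board_def)
      then show "D \<in> horiz_rect_moves (n - 1) G" using D m unfolding horiz_rect_moves_def by auto
    qed
    show "horiz_rect_moves (n - 1) G \<subseteq> horiz_torus_moves n G"
    proof
      fix D assume "D \<in> horiz_rect_moves (n - 1) G"
      then obtain r c where D: "D = {(r,c),(r,c+1)}" "r < 2" "c + 1 < n - 1" "(r,c) \<in> G" "(r,c+1) \<in> G"
        unfolding horiz_rect_moves_def by blast
      then have m: "(c+1) mod n = c + 1" by simp
      then show "D \<in> horiz_torus_moves n G" using D unfolding horiz_torus_moves_def
        by (smt (verit, best) less_diff_conv mem_Collect_eq add_lessD1)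
    qed
  qed
  then show ?thesis using Hepzibah by (simp add: torus_moves_def rect_moves_def)
qed

lemma A5: "n \<ge> 1 \<Longrightarrow> wins (torus_moves n) p (board (n - 1)) = wins (rect_moves (n - 1)) p (board (n - 1))"
  unfolding wins_def
  by (rule wk_agree[of "board (n - 1)", OF agree]) (auto dest: torus_mv)

lemma mono_moves1: "rect_moves n Vera G = torus_moves n Vera G"
  by (simp add: rect_moves_def torus_moves_def)

lemma mono_moves2: "rect_moves n Hepzibah G \<subseteq> torus_moves n Hepzibah G"
  unfolding rect_moves_def torus_moves_def horiz_rect_moves_def horiz_torus_moves_def
  apply clarsimp
  subgoal for r c by (rule exI[of _ r], rule exI[of _ c]) simp
  done

theorem mainTheorem13:
  fixes n :: nat
  assumes "n \<ge> 2"
  shows "(rect_outcome n = OH \<longrightarrow> torus_outcome n = OH)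
       \<and> (rect_outcome n = OFirst \<and> rect_outcome (n - 1) \<in> {OFirst, OH}
            \<longrightarrow> torus_outcome n = OH)
       \<and> (rect_outcome n = OFirst \<and> rect_outcome (n - 1) \<in> {OSecond, OV}
            \<longrightarrow> torus_outcome n = OFirst)
       \<and> (rect_outcome n \<in> {OSecond, OV} \<and> rect_outcome (n - 1) \<in> {OFirst, OH}
            \<longrightarrow> torus_outcome n \<in> {OSecond, OH})"
proof -
  have m: "(wins_k k (rect_moves n) Hepzibah F \<longrightarrow> wins_k k (torus_moves n) Hepzibah F) \<and>
        (wins_k k (torus_moves n) Vera F \<longrightarrow> wins_k k (rect_moves n) Vera F)" for k F
    by (rule wk_mono) (auto simp: mono_moves1 mono_moves2)
  have HR: "wins (rect_moves n) Hepzibah (board n) \<longrightarrow> wins (torus_moves n) Hepzibah (board n)"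
    using m unfolding wins_def by blast
  have VT: "wins (torus_moves n) Vera (board n) \<longrightarrow> wins (rect_moves n) Vera (board n)"
    using m unfolding wins_def by blast
  have n1: "n - 1 < n" "n \<ge> 1" using assms by auto
  have VT2: "wins (torus_moves n) Vera (board n) = (\<not> wins (rect_moves (n - 1)) Hepzibah (board (n - 1)))"
    unfolding A3 using A4[of _ n Hepzibah] A4[OF n1(1), of Hepzibah] board_minus_last[OF n1(2)] A5[OF n1(2)] n1
    by metis
  show ?thesis
    unfolding rect_outcome_def torus_outcome_def outcome_of_def Let_def
    using HR VT VT2 by (auto split: if_splits)
qed

end
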